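(* The group $Fr(162\times 4)$ is not isomorphic to the group $\Sigma(216\times 3)$ (which also has order $648$).
   Context: Let $\omega=e^{2i\pi/3}$, $\varepsilon=e^{4i\pi/9}$, $J$ the $3\times3$ antidiagonal matrix with antidiagonal entries $1$. $G_1=\mathrm{diag}(e^{7i\pi/9},-e^{4i\pi/9},-e^{7i\pi/9})$, $G_2=\begin{pmatrix}-\tfrac12 e^{4i\pi/9}&\tfrac{1}{\sqrt2}e^{7i\pi/9}&\tfrac12 e^{4i\pi/9}\\ \tfrac{1}{\sqrt2}e^{7i\pi/9}&0&\tfrac{1}{\sqrt2}e^{7i\pi/9}\\ \tfrac12 e^{4i\pi/9}&\tfrac{1}{\sqrt2}e^{7i\pi/9}&-\tfrac12 e^{4i\pi/9}\end{pmatrix}$, $FUM=-\omega J$, $Fr(162\times 4)=\langle G_1,G_2,FUM\rangle\subset SU(3)$. $\Sigma(216\times 3)$ is the subgroup of $SU(3)$ generated by $D=\mathrm{diag}(\varepsilon,\varepsilon,\varepsilon\omega)$ and $V=\frac{1}{i\sqrt3}\begin{pmatrix}1&1&1\\1&\omega&\omega^2\\1&\omega^2&\omega\end{pmatrix}$. *)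

theory Defs
  imports "HOL-Analysis.Analysis" "HOL-Algebra.Generated_Groups"
begin

text \<open>The groups of the paper are the
  subgroups of it generated by the given matrices (they lie in SU(3)).\<close>

type_synonym cmat3 = "complex ^ 3 ^ 3"

definition GL3 :: "cmat3 monoid" where
  "GL3 = \<lparr>carrier = {A. invertible A}, mult = (\<lambda>A B. A ** B), one = mat 1\<rparr>"

definition mat3 :: "complex list list \<Rightarrow> cmat3" where
  "mat3 rs = vector (map vector rs)"

definition omega :: complex where "omega = cis (2 * pi / 3)"
definition eps :: complex where "eps = cis (4 * pi / 9)"

definition Jmat :: cmat3 where
  "Jmat = mat3 [[0,0,1],[0,1,0],[1,0,0]]"

definition G1 :: cmat3 where
  "G1 = mat3 [[cis (7*pi/9), 0, 0], [0, - cis (4*pi/9), 0], [0, 0, - cis (7*pi/9)]]"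

definition G2 :: cmat3 where
  "G2 = mat3
    [[- (1/2) * cis (4*pi/9), (1 / complex_of_real (sqrt 2)) * cis (7*pi/9), (1/2) * cis (4*pi/9)],
     [(1 / complex_of_real (sqrt 2)) * cis (7*pi/9), 0, (1 / complex_of_real (sqrt 2)) * cis (7*pi/9)],
     [(1/2) * cis (4*pi/9), (1 / complex_of_real (sqrt 2)) * cis (7*pi/9), - (1/2) * cis (4*pi/9)]]"

definition FUM :: cmat3 where
  "FUM = (\<chi> i j. - omega * Jmat $ i $ j)"

definition Dmat :: cmat3 where
  "Dmat = mat3 [[eps, 0, 0], [0, eps, 0], [0, 0, eps * omega]]"

definition Vmat :: cmat3 where
  "Vmat = (\<chi> i j. (1 / (\<i> * complex_of_real (sqrt 3))) *
      mat3 [[1,1,1],[1,omega,omega^2],[1,omega^2,omega]] $ i $ j)"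

definition Fr_162_4 :: "cmat3 monoid" where
  "Fr_162_4 = GL3\<lparr>carrier := generate GL3 {G1, G2, FUM}\<rparr>"

definition Sigma_216_3 :: "cmat3 monoid" where
  "Sigma_216_3 = GL3\<lparr>carrier := generate GL3 {Dmat, Vmat}\<rparr>"

end

theory Submission
  imports Defs
begin


lemma mat3_mult:
  "mat3 [[a11,a12,a13],[a21,a22,a23],[a31,a32,a33]] ** mat3 [[b11,b12,b13],[b21,b22,b23],[b31,b32,b33]]
   = mat3 [[a11*b11+a12*b21+a13*b31, a11*b12+a12*b22+a13*b32, a11*b13+a12*b23+a13*b33],
           [a21*b11+a22*b21+a23*b31, a21*b12+a22*b22+a23*b32, a21*b13+a22*b23+a23*b33],
           [a31*b11+a32*b21+a33*b31, a31*b12+a32*b22+a33*b32, a31*b13+a32*b23+a33*b33]]"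
  by (simp add: vec_eq_iff forall_3 matrix_matrix_mult_def sum_3 mat3_def)

lemma mat3_eq_iff:
  "(mat3 [[a11,a12,a13],[a21,a22,a23],[a31,a32,a33]] = mat3 [[b11,b12,b13],[b21,b22,b23],[b31,b32,b33]])
   = (a11=b11 \<and> a12=b12 \<and> a13=b13 \<and> a21=b21 \<and> a22=b22 \<and> a23=b23 \<and> a31=b31 \<and> a32=b32 \<and> a33=b33)"
  by (simp add: vec_eq_iff forall_3 mat3_def)

lemma mat1_3: "(mat 1 :: cmat3) = mat3 [[1,0,0],[0,1,0],[0,0,1]]"
  by (simp add: vec_eq_iff forall_3 mat3_def mat_def)

lemma omega3: "omega ^ 3 = 1"
proof -
  have "omega ^ 3 = cis (real 3 * (2*pi/3))" unfolding omega_def by (rule Complex.DeMoivre)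
  also have "real 3 * (2*pi/3) = 2 * pi * 1" by simp
  also have "cis (2*pi*1) = 1" by (simp del: cis.ctr)
  finally show ?thesis .
qed

lemma omega_ne1: "omega \<noteq> 1"
proof
  assume "omega = 1"
  hence "Re omega = 1" by simp
  moreover have "Re omega = cos (2*pi/3)" by (simp add: omega_def)
  moreover have "cos (2*pi/3) = - 1/2" by (rule cos_120)
  ultimately show False by simp
qed

lemma omega_sum: "1 + omega + omega^2 = 0"
proof -
  have "(omega - 1) * (1 + omega + omega^2) = omega^3 - 1" by (simp add: algebra_simps power2_eq_square power3_eq_cube)
  also have "\<dots> = 0" by (simp add: omega3)
  finally show ?thesis using omega_ne1 by simp
qed

lemma eps9: "eps ^ 9 = 1"
proof -
  have "eps ^ 9 = cis (real 9 * (4*pi/9))" unfolding eps_def by (rule Complex.DeMoivre)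
  also have "real 9 * (4*pi/9) = 2 * pi * 2" by simp
  also have "cis (2*pi*2) = 1" by (metis cis_multiple_2pi of_int_numeral Ints_of_int)
  finally show ?thesis .
qed
lemma perm6:
  fixes \<sigma> :: "3 \<Rightarrow> 3" assumes "bij \<sigma>"
  shows "\<sigma> (\<sigma> (\<sigma> (\<sigma> (\<sigma> (\<sigma> j))))) = j"
proof -
  have inj: "\<And>x y. \<sigma> x = \<sigma> y \<Longrightarrow> x = y" using bij_is_inj[OF assms] by (simp add: inj_eq)
  have d: "(1::3) \<noteq> 2" "(1::3) \<noteq> 3" "(2::3) \<noteq> 3" by simp_all
  show ?thesis
    using exhaust_3[of "\<sigma> 1"] exhaust_3[of "\<sigma> 2"] exhaust_3[of "\<sigma> 3"] exhaust_3[of j]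
      inj[of 1 2] inj[of 1 3] inj[of 2 3] d
    by (elim disjE; simp)
qed

definition monoM :: "(3 \<Rightarrow> 3) \<Rightarrow> (3 \<Rightarrow> complex) \<Rightarrow> cmat3" where
  "monoM \<sigma> c = (\<chi> i j. if i = \<sigma> j then c j else 0)"

lemma monoM_mult: "monoM \<sigma>1 c1 ** monoM \<sigma>2 c2 = monoM (\<sigma>1 \<circ> \<sigma>2) (\<lambda>j. c1 (\<sigma>2 j) * c2 j)"
proof -
  have "\<And>i j. (\<Sum>k\<in>UNIV. (if i = \<sigma>1 k then c1 k else 0) * (if k = \<sigma>2 j then c2 j else 0))
     = (if i = \<sigma>1 (\<sigma>2 j) then c1 (\<sigma>2 j) * c2 j else 0)"
  proof -
    fix i j
    have "(\<Sum>k\<in>UNIV. (if i = \<sigma>1 k then c1 k else 0) * (if k = \<sigma>2 j then c2 j else 0))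
      = (\<Sum>k\<in>UNIV. if k = \<sigma>2 j then (if i = \<sigma>1 k then c1 k else 0) * c2 j else 0)"
      by (rule sum.cong) auto
    also have "\<dots> = (if i = \<sigma>1 (\<sigma>2 j) then c1 (\<sigma>2 j) * c2 j else 0)" by (simp add: sum.delta')
    finally show "?thesis i j" .
  qed
  thus ?thesis by (simp add: monoM_def matrix_matrix_mult_def vec_eq_iff)
qed

lemma monoM_id: "monoM id (\<lambda>_. 1) = mat 1"
  by (simp add: monoM_def mat_def vec_eq_iff)

lemma monoM_inv:
  assumes "bij \<sigma>" "\<forall>j. c j \<noteq> 0"
  shows "monoM \<sigma> c ** monoM (inv_into UNIV \<sigma>) (\<lambda>j. 1 / c (inv_into UNIV \<sigma> j)) = mat 1"
    "monoM (inv_into UNIV \<sigma>) (\<lambda>j. 1 / c (inv_into UNIV \<sigma> j)) ** monoM \<sigma> c = mat 1"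
    "bij (inv_into UNIV \<sigma>)"
proof -
  have s: "\<And>y. \<sigma> (inv_into UNIV \<sigma> y) = y" using surj_f_inv_f[OF bij_is_surj[OF assms(1)]] .
  have i: "\<And>y. inv_into UNIV \<sigma> (\<sigma> y) = y" using inv_f_f[OF bij_is_inj[OF assms(1)]] .
  have "\<sigma> \<circ> inv_into UNIV \<sigma> = id" "inv_into UNIV \<sigma> \<circ> \<sigma> = id" using s i by auto
  thus "monoM \<sigma> c ** monoM (inv_into UNIV \<sigma>) (\<lambda>j. 1 / c (inv_into UNIV \<sigma> j)) = mat 1"
    "monoM (inv_into UNIV \<sigma>) (\<lambda>j. 1 / c (inv_into UNIV \<sigma> j)) ** monoM \<sigma> c = mat 1"
    using assms(2) by (simp_all add: monoM_mult i monoM_id[symmetric])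
  show "bij (inv_into UNIV \<sigma>)" using assms(1) by (simp add: bij_imp_bij_inv)
qed

lemma inv_GL3:
  assumes "A ** B = mat 1" "B ** A = mat 1"
  shows "inv\<^bsub>GL3\<^esub> A = B"
  unfolding m_inv_def GL3_def
proof (simp, rule the_equality)
  show "invertible B \<and> A ** B = mat 1 \<and> B ** A = mat 1"
    using assms invertible_def by blast
  fix y assume "invertible y \<and> A ** y = mat 1 \<and> y ** A = mat 1"
  hence "y ** A = mat 1" by blast
  have "y = y ** (A ** B)" using assms(1) by simp
  also have "\<dots> = (y ** A) ** B" by (simp add: matrix_mul_assoc)
  also have "\<dots> = B" using \<open>y ** A = mat 1\<close> by simp
  finally show "y = B" .
qed



definition sq2 :: complex where "sq2 = 1 / complex_of_real (sqrt 2)"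

definition m3 :: "complex \<Rightarrow> complex \<Rightarrow> complex \<Rightarrow> complex \<Rightarrow> complex \<Rightarrow> complex \<Rightarrow> complex \<Rightarrow> complex \<Rightarrow> complex \<Rightarrow> cmat3" where
  "m3 a b c d e f g h k = (\<chi> i j. if i = 1 then (if j = 1 then a else if j = 2 then b else c)
     else if i = 2 then (if j = 1 then d else if j = 2 then e else f)
     else (if j = 1 then g else if j = 2 then h else k))"



lemma m3_nth [simp]:
  "m3 a b c d e f g h k $ 1 $ 1 = a" "m3 a b c d e f g h k $ 1 $ 2 = b" "m3 a b c d e f g h k $ 1 $ 3 = c"
  "m3 a b c d e f g h k $ 2 $ 1 = d" "m3 a b c d e f g h k $ 2 $ 2 = e" "m3 a b c d e f g h k $ 2 $ 3 = f"
  "m3 a b c d e f g h k $ 3 $ 1 = g" "m3 a b c d e f g h k $ 3 $ 2 = h" "m3 a b c d e f g h k $ 3 $ 3 = k"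
  by (simp_all add: m3_def)



lemma m3_mult:
  "m3 a11 a12 a13 a21 a22 a23 a31 a32 a33 ** m3 b11 b12 b13 b21 b22 b23 b31 b32 b33
   = m3 (a11*b11+a12*b21+a13*b31) (a11*b12+a12*b22+a13*b32) (a11*b13+a12*b23+a13*b33)
        (a21*b11+a22*b21+a23*b31) (a21*b12+a22*b22+a23*b32) (a21*b13+a22*b23+a23*b33)
        (a31*b11+a32*b21+a33*b31) (a31*b12+a32*b22+a33*b32) (a31*b13+a32*b23+a33*b33)"
  by (simp add: vec_eq_iff forall_3 matrix_matrix_mult_def sum_3)



lemma m3_eq_iff:
  "(m3 a11 a12 a13 a21 a22 a23 a31 a32 a33 = m3 b11 b12 b13 b21 b22 b23 b31 b32 b33)
   = (a11=b11 \<and> a12=b12 \<and> a13=b13 \<and> a21=b21 \<and> a22=b22 \<and> a23=b23 \<and> a31=b31 \<and> a32=b32 \<and> a33=b33)"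
  by (simp add: vec_eq_iff forall_3) 




lemma sq2_sq: "sq2 * sq2 = 1/2"
proof -
  have a: "complex_of_real (sqrt 2) * complex_of_real (sqrt 2) = complex_of_real (sqrt 2 * sqrt 2)"
    by (simp only: of_real_mult)
  have b: "sqrt 2 * sqrt (2::real) = 2" by simp
  have "sq2 * sq2 = 1 / (complex_of_real (sqrt 2) * complex_of_real (sqrt 2))"
    unfolding sq2_def by (simp only: divide_inverse inverse_mult_distrib mult_1)
  also have "\<dots> = 1/2" unfolding a b by simp
  finally show ?thesis .
qed

definition Qm :: cmat3 where "Qm = m3 sq2 0 sq2 0 1 0 sq2 0 (-sq2)"

lemma mat1_m3: "(mat 1 :: cmat3) = m3 1 0 0 0 1 0 0 0 1"
  by (simp add: vec_eq_iff forall_3 mat_def)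

lemma QQ: "Qm ** Qm = mat 1"
  unfolding Qm_def mat1_m3 m3_mult m3_eq_iff by (simp add: sq2_sq)

lemma QMQ1: "Qm ** m3 0 0 b 0 (-a) 0 b 0 0 ** Qm = m3 b 0 0 0 (-a) 0 0 0 (-b)"
  unfolding Qm_def m3_mult m3_eq_iff using sq2_sq by simp algebra

lemma QMQ2: "Qm ** m3 0 b 0 b 0 0 0 0 (-a) ** Qm = 
   m3 (-(1/2)*a) (sq2*b) ((1/2)*a) (sq2*b) 0 (sq2*b) ((1/2)*a) (sq2*b) (-(1/2)*a)"
  unfolding Qm_def m3_mult m3_eq_iff using sq2_sq by simp algebra

lemma QMQ3: "Qm ** m3 (-w) 0 0 0 (-w) 0 0 0 w ** Qm = m3 0 0 (-w) 0 (-w) 0 (-w) 0 0"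
  unfolding Qm_def m3_mult m3_eq_iff using sq2_sq by simp algebra




lemma G1_m3: "G1 = m3 (cis (7*pi/9)) 0 0 0 (- cis (4*pi/9)) 0 0 0 (- cis (7*pi/9))"
  by (simp add: G1_def mat3_def vec_eq_iff forall_3 del: cis.ctr)

lemma G2_m3: "G2 = m3 (-(1/2)*cis (4*pi/9)) (sq2*cis (7*pi/9)) ((1/2)*cis (4*pi/9))
   (sq2*cis (7*pi/9)) 0 (sq2*cis (7*pi/9)) ((1/2)*cis (4*pi/9)) (sq2*cis (7*pi/9)) (-(1/2)*cis (4*pi/9))"
  by (simp add: G2_def sq2_def mat3_def vec_eq_iff forall_3 del: cis.ctr)

lemma FUM_m3: "FUM = m3 0 0 (-omega) 0 (-omega) 0 (-omega) 0 0"
  by (simp add: FUM_def Jmat_def mat3_def vec_eq_iff forall_3)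

lemma monoM_m3: "monoM \<sigma> c = m3
  (if 1 = \<sigma> 1 then c 1 else 0) (if 1 = \<sigma> 2 then c 2 else 0) (if 1 = \<sigma> 3 then c 3 else 0)
  (if 2 = \<sigma> 1 then c 1 else 0) (if 2 = \<sigma> 2 then c 2 else 0) (if 2 = \<sigma> 3 then c 3 else 0)
  (if 3 = \<sigma> 1 then c 1 else 0) (if 3 = \<sigma> 2 then c 2 else 0) (if 3 = \<sigma> 3 then c 3 else 0)"
  by (simp add: monoM_def vec_eq_iff forall_3)

definition sw13 :: "3 \<Rightarrow> 3" where "sw13 j = (if j = 1 then 3 else if j = 3 then 1 else j)"
definition sw12 :: "3 \<Rightarrow> 3" where "sw12 j = (if j = 1 then 2 else if j = 2 then 1 else j)"

lemma bij_sw13: "bij sw13"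
  by (rule o_bij[of sw13]) (auto simp: sw13_def fun_eq_iff)
lemma bij_sw12: "bij sw12"
  by (rule o_bij[of sw12]) (auto simp: sw12_def fun_eq_iff)

definition c1 :: "3 \<Rightarrow> complex" where "c1 j = (if j = 2 then - cis (4*pi/9) else cis (7*pi/9))"
definition c2 :: "3 \<Rightarrow> complex" where "c2 j = (if j = 3 then - cis (4*pi/9) else cis (7*pi/9))"
definition c3 :: "3 \<Rightarrow> complex" where "c3 j = (if j = 3 then omega else - omega)"

lemma G1_dec: "G1 = Qm ** monoM sw13 c1 ** Qm"
proof -
  have h: "monoM sw13 c1 = m3 0 0 (cis (7*pi/9)) 0 (- cis (4*pi/9)) 0 (cis (7*pi/9)) 0 0"
    unfolding monoM_m3 by (simp add: sw13_def c1_def del: cis.ctr)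
  show ?thesis unfolding G1_m3 h QMQ1 by simp
qed

lemma G2_dec: "G2 = Qm ** monoM sw12 c2 ** Qm"
proof -
  have h: "monoM sw12 c2 = m3 0 (cis (7*pi/9)) 0 (cis (7*pi/9)) 0 0 0 0 (- cis (4*pi/9))"
    unfolding monoM_m3 by (simp add: sw12_def c2_def del: cis.ctr)
  show ?thesis unfolding G2_m3 h QMQ2 by simp
qed

lemma FUM_dec: "FUM = Qm ** monoM id c3 ** Qm"
proof -
  have h: "monoM id c3 = m3 (-omega) 0 0 0 (-omega) 0 0 0 omega"
    unfolding monoM_m3 by (simp add: c3_def)
  show ?thesis unfolding FUM_m3 h QMQ3 by simp
qed

lemma omega_ne0: "omega \<noteq> 0" using omega3 by auto

lemma c_ne0: "\<forall>j. c1 j \<noteq> 0" "\<forall>j. c2 j \<noteq> 0" "\<forall>j. c3 j \<noteq> 0"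
  by (auto simp: c1_def c2_def c3_def omega_ne0 simp del: cis.ctr)




definition Tset :: "cmat3 set" where
  "Tset = {Qm ** monoM \<sigma> c ** Qm | \<sigma> c. bij \<sigma> \<and> (\<forall>j. c j \<noteq> 0)}"

lemma QQ_r [simp]: "X ** Qm ** Qm = X"
  by (simp add: matrix_mul_assoc[symmetric] QQ)

lemma QQ_mid: "Qm ** A ** Qm ** (Qm ** B ** Qm) = Qm ** (A ** B) ** Qm"
proof -
  have "Qm ** A ** Qm ** (Qm ** B ** Qm) = Qm ** A ** (Qm ** Qm) ** B ** Qm"
    by (simp only: matrix_mul_assoc)
  also have "\<dots> = Qm ** (A ** B) ** Qm" by (simp only: QQ matrix_mul_rid matrix_mul_assoc)
  finally show ?thesis .
qed

lemma T_mult: assumes "x \<in> Tset" "y \<in> Tset" shows "x ** y \<in> Tset"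
proof -
  obtain s1 d1 where x: "x = Qm ** monoM s1 d1 ** Qm" "bij s1" "\<forall>j. d1 j \<noteq> 0"
    using assms(1) unfolding Tset_def by blast
  obtain s2 d2 where y: "y = Qm ** monoM s2 d2 ** Qm" "bij s2" "\<forall>j. d2 j \<noteq> 0"
    using assms(2) unfolding Tset_def by blast
  have "x ** y = Qm ** (monoM s1 d1 ** monoM s2 d2) ** Qm"
    unfolding x y by (rule QQ_mid)
  also have "\<dots> = Qm ** monoM (s1 \<circ> s2) (\<lambda>j. d1 (s2 j) * d2 j) ** Qm" by (simp add: monoM_mult)
  finally have e: "x ** y = Qm ** monoM (s1 \<circ> s2) (\<lambda>j. d1 (s2 j) * d2 j) ** Qm" .
  have "bij (s1 \<circ> s2)" using x(2) y(2) by (rule bij_comp[rotated])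
  moreover have "\<forall>j. d1 (s2 j) * d2 j \<noteq> 0" using x(3) y(3) by simp
  ultimately show ?thesis unfolding Tset_def using e by blast
qed

lemma T_inv: assumes "x \<in> Tset" shows "\<exists>y\<in>Tset. x ** y = mat 1 \<and> y ** x = mat 1"
proof -
  obtain s1 d1 where x: "x = Qm ** monoM s1 d1 ** Qm" "bij s1" "\<forall>j. d1 j \<noteq> 0"
    using assms(1) unfolding Tset_def by blast
  define y where "y = Qm ** monoM (inv_into UNIV s1) (\<lambda>j. 1 / d1 (inv_into UNIV s1 j)) ** Qm"
  note I = monoM_inv[OF x(2) x(3)]
  have "\<forall>j. 1 / d1 (inv_into UNIV s1 j) \<noteq> 0" using x(3) by simp
  hence "y \<in> Tset" unfolding y_def Tset_def using I(3) by blast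
  moreover have "x ** y = mat 1" unfolding x y_def
    unfolding QQ_mid I(1) matrix_mul_rid QQ ..
  moreover have "y ** x = mat 1" unfolding x y_def
    unfolding QQ_mid I(2) matrix_mul_rid QQ ..
  ultimately show ?thesis by blast
qed

lemma T_one: "mat 1 \<in> Tset"
proof -
  have "mat 1 = Qm ** monoM id (\<lambda>_. 1) ** Qm" by (simp add: monoM_id QQ)
  thus ?thesis unfolding Tset_def by fastforce
qed

lemma gens_T: "G1 \<in> Tset" "G2 \<in> Tset" "FUM \<in> Tset"
  unfolding Tset_def using G1_dec G2_dec FUM_dec bij_sw13 bij_sw12 c_ne0 by blast+

lemma gen_T: "x \<in> generate GL3 {G1, G2, FUM} \<Longrightarrow> x \<in> Tset"
proof (induction x rule: generate.induct)
  case one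
  then show ?case using T_one by (simp add: GL3_def)
next
  case (incl h)
  then show ?case using gens_T by blast
next
  case (inv h)
  then have "h \<in> Tset" using gens_T by blast
  then obtain y where "y \<in> Tset" "h ** y = mat 1" "y ** h = mat 1" using T_inv by blast
  then show ?case using inv_GL3 by simp
next
  case (eng h1 h2)
  then show ?case using T_mult by (simp add: GL3_def)
qed

definition P6 :: "cmat3 \<Rightarrow> cmat3" where "P6 x = x ** x ** x ** x ** x ** x"

lemma T_pow6: assumes "x \<in> Tset" shows "\<exists>c. P6 x = Qm ** monoM id c ** Qm"
proof -
  obtain s1 d1 where x: "x = Qm ** monoM s1 d1 ** Qm" "bij s1" "\<forall>j. d1 j \<noteq> 0"
    using assms(1) unfolding Tset_def by blast
  have e: "s1 \<circ> s1 \<circ> s1 \<circ> s1 \<circ> s1 \<circ> s1 = id"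
    using perm6[OF x(2)] by (simp add: fun_eq_iff)
  have "P6 x = Qm ** (monoM s1 d1 ** monoM s1 d1 ** monoM s1 d1 ** monoM s1 d1 ** monoM s1 d1 ** monoM s1 d1) ** Qm"
    unfolding P6_def x by (simp only: QQ_mid)
  moreover have "\<exists>c. monoM s1 d1 ** monoM s1 d1 ** monoM s1 d1 ** monoM s1 d1 ** monoM s1 d1 ** monoM s1 d1
     = monoM (s1 \<circ> s1 \<circ> s1 \<circ> s1 \<circ> s1 \<circ> s1) c"
    unfolding monoM_mult by blast
  ultimately show ?thesis unfolding e by metis
qed

lemma T_comm: assumes "x \<in> Tset" "y \<in> Tset" shows "P6 x ** P6 y = P6 y ** P6 x"
proof -
  obtain c where c: "P6 x = Qm ** monoM id c ** Qm" using T_pow6[OF assms(1)] by blast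
  obtain d where d: "P6 y = Qm ** monoM id d ** Qm" using T_pow6[OF assms(2)] by blast
  have "monoM id c ** monoM id d = monoM id d ** monoM id c"
    by (simp add: monoM_mult mult.commute)
  hence "Qm ** (monoM id c ** monoM id d) ** Qm = Qm ** (monoM id d ** monoM id c) ** Qm" by simp
  thus ?thesis unfolding c d by (simp only: QQ_mid)
qed




definition kk :: complex where "kk = 1 / (\<i> * complex_of_real (sqrt 3))"

lemma kk_sq: "kk * kk = - 1/3"
proof -
  have a: "complex_of_real (sqrt 3) * complex_of_real (sqrt 3) = complex_of_real (sqrt 3 * sqrt 3)"
    by (simp only: of_real_mult)
  have b: "sqrt 3 * sqrt (3::real) = 3" by simp
  have "kk * kk = 1 / (\<i> * \<i> * (complex_of_real (sqrt 3) * complex_of_real (sqrt 3)))"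
    unfolding kk_def by (simp only: divide_inverse inverse_mult_distrib mult_1 mult_ac)
  also have "\<dots> = - 1/3" unfolding a b by simp
  finally show ?thesis .
qed

lemma V_m3: "Vmat = m3 kk kk kk kk (kk * omega) (kk * omega^2) kk (kk * omega^2) (kk * omega)"
  by (simp add: Vmat_def kk_def mat3_def vec_eq_iff forall_3)

definition NP :: cmat3 where "NP = m3 (-1) 0 0 0 0 (-1) 0 (-1) 0"

lemma VV: "Vmat ** Vmat = NP"
  unfolding V_m3 NP_def m3_mult m3_eq_iff using kk_sq omega3 omega_sum by simp algebra

lemma P6V: "P6 Vmat = NP"
proof -
  have "P6 Vmat = (Vmat ** Vmat) ** (Vmat ** Vmat) ** (Vmat ** Vmat)"
    unfolding P6_def by (simp only: matrix_mul_assoc)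
  also have "\<dots> = NP" unfolding VV NP_def m3_mult by simp
  finally show ?thesis .
qed

lemma eps_ne0: "eps \<noteq> 0" using eps9 by auto

definition Dinv :: cmat3 where "Dinv = m3 (1/eps) 0 0 0 (1/eps) 0 0 0 (1/(eps * omega))"

lemma D_m3: "Dmat = m3 eps 0 0 0 eps 0 0 0 (eps * omega)"
  by (simp add: Dmat_def mat3_def vec_eq_iff forall_3)

lemma DDinv: "Dmat ** Dinv = mat 1" "Dinv ** Dmat = mat 1"
  unfolding D_m3 Dinv_def m3_mult mat1_m3 m3_eq_iff using eps_ne0 omega_ne0 by simp_all

lemma Dinv_D_r: "X ** Dinv ** Dmat = X"
  by (simp add: matrix_mul_assoc[symmetric] DDinv)

lemma P6W: "P6 (Dmat ** Vmat ** Dinv) = Dmat ** NP ** Dinv"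
proof -
  have "P6 (Dmat ** Vmat ** Dinv) = Dmat ** P6 Vmat ** Dinv"
    unfolding P6_def by (simp only: matrix_mul_assoc Dinv_D_r)
  thus ?thesis unfolding P6V .
qed

lemma noncomm: "NP ** (Dmat ** NP ** Dinv) \<noteq> (Dmat ** NP ** Dinv) ** NP"
proof
  assume "NP ** (Dmat ** NP ** Dinv) = (Dmat ** NP ** Dinv) ** NP"
  hence "omega = 1 / omega"
    unfolding NP_def D_m3 Dinv_def m3_mult m3_eq_iff using eps_ne0 by simp
  hence "omega * omega = 1" using omega_ne0 by (simp add: field_simps)
  hence "omega = 1" using omega3 by (simp add: power3_eq_cube)
  thus False using omega_ne1 by simp
qed




lemma Fr_carrier: "carrier Fr_162_4 = generate GL3 {G1, G2, FUM}"
  by (simp add: Fr_162_4_def)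
lemma Fr_mult: "mult Fr_162_4 = (\<lambda>A B. A ** B)"
  by (simp add: Fr_162_4_def GL3_def)
lemma Sig_carrier: "carrier Sigma_216_3 = generate GL3 {Dmat, Vmat}"
  by (simp add: Sigma_216_3_def)
lemma Sig_mult: "mult Sigma_216_3 = (\<lambda>A B. A ** B)"
  by (simp add: Sigma_216_3_def GL3_def)

lemma gen_mult: "x \<in> generate GL3 H \<Longrightarrow> y \<in> generate GL3 H \<Longrightarrow> x ** y \<in> generate GL3 H"
  using generate.eng[of x GL3 H y] by (simp add: GL3_def)

theorem theorem9:
  shows "\<not> (Fr_162_4 \<cong> Sigma_216_3)"
proof
  assume "Fr_162_4 \<cong> Sigma_216_3"
  then obtain f where f: "f \<in> iso Fr_162_4 Sigma_216_3" unfolding is_iso_def by blast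
  hence hom: "\<And>x y. x \<in> generate GL3 {G1, G2, FUM} \<Longrightarrow> y \<in> generate GL3 {G1, G2, FUM} \<Longrightarrow>
      f (x ** y) = f x ** f y"
    unfolding iso_def hom_def Fr_carrier Fr_mult Sig_mult by simp
  have surj: "f ` generate GL3 {G1, G2, FUM} = generate GL3 {Dmat, Vmat}"
    using f unfolding iso_def Fr_carrier Sig_carrier by (simp add: bij_betw_def)
  let ?F = "generate GL3 {G1, G2, FUM}"
  have P6h: "f (P6 x) = P6 (f x)" if x: "x \<in> ?F" for x
  proof -
    have x2: "x ** x \<in> ?F" using gen_mult x by blast
    have x3: "x ** x ** x \<in> ?F" using gen_mult x x2 by blast
    have x4: "x ** x ** x ** x \<in> ?F" using gen_mult x x3 by blast
    have x5: "x ** x ** x ** x ** x \<in> ?F" using gen_mult x x4 by blast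
    show ?thesis unfolding P6_def using hom x x2 x3 x4 x5 by simp
  qed
  have V: "Vmat \<in> generate GL3 {Dmat, Vmat}" by (rule generate.incl) simp
  have "inv\<^bsub>GL3\<^esub> Dmat \<in> generate GL3 {Dmat, Vmat}" by (rule generate.inv) simp
  hence Di: "Dinv \<in> generate GL3 {Dmat, Vmat}" using inv_GL3[OF DDinv] by simp
  have D: "Dmat \<in> generate GL3 {Dmat, Vmat}" by (rule generate.incl) simp
  have W: "Dmat ** Vmat ** Dinv \<in> generate GL3 {Dmat, Vmat}"
    using gen_mult[OF gen_mult[OF D V] Di] .
  have "Vmat \<in> f ` ?F" using V surj by simp
  then obtain a where a: "a \<in> ?F" "f a = Vmat" by (auto elim!: imageE)
  have "Dmat ** Vmat ** Dinv \<in> f ` ?F" using W surj by simp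
  then obtain b where b: "b \<in> ?F" "f b = Dmat ** Vmat ** Dinv" by (auto elim!: imageE)
  have c: "P6 a ** P6 b = P6 b ** P6 a" using T_comm gen_T a(1) b(1) by blast
  have pa: "P6 a \<in> ?F" unfolding P6_def using gen_mult a(1) by blast
  have pb: "P6 b \<in> ?F" unfolding P6_def using gen_mult b(1) by blast
  have "f (P6 a ** P6 b) = f (P6 b ** P6 a)" using c by simp
  hence "P6 Vmat ** P6 (Dmat ** Vmat ** Dinv) = P6 (Dmat ** Vmat ** Dinv) ** P6 Vmat"
    using hom[OF pa pb] hom[OF pb pa] P6h[OF a(1)] P6h[OF b(1)] a(2) b(2) by simp
  thus False unfolding P6V P6W using noncomm by simp
qed


end
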